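(* For every real $c<1$ there exist an infinite binary sequence $\omega=\omega_1\omega_2\omega_3\dots$ and a constant $d$ such that every finite substring $x=\omega_i\omega_{i+1}\dots\omega_j$ of $\omega$ satisfies $K(x)\ge c\,\|x\|-d$. *)

theory Defs
  imports Complex_Main "HOL-Library.Extended_Real" "HOL-Library.Sublist"
begin

datatype recf = Z | S | Id nat | Cn recf "recf list" | Pr recf recf | Mn recf

inductive eval :: "recf \<Rightarrow> nat list \<Rightarrow> nat \<Rightarrow> bool" where
  evZ: "eval Z xs 0"
| evS: "eval S (x # xs) (Suc x)"
| evId: "i < length xs \<Longrightarrow> eval (Id i) xs (xs ! i)"
| evCn: "length ys = length gs \<Longrightarrow> (\<forall>k < length gs. eval (gs ! k) xs (ys ! k))
          \<Longrightarrow> eval f ys z \<Longrightarrow> eval (Cn f gs) xs z"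
| evPr0: "eval g xs z \<Longrightarrow> eval (Pr g h) (0 # xs) z"
| evPrS: "eval (Pr g h) (n # xs) y \<Longrightarrow> eval h (n # y # xs) z
          \<Longrightarrow> eval (Pr g h) (Suc n # xs) z"
| evMn: "eval f (n # xs) 0 \<Longrightarrow> (\<forall>m < n. \<exists>y. 0 < y \<and> eval f (m # xs) y)
          \<Longrightarrow> eval (Mn f) xs n"

text \<open>Bijective coding of binary strings by natural numbers.\<close>
fun code :: "bool list \<Rightarrow> nat" where
  "code [] = 0"
| "code (b # bs) = (if b then 2 else 1) + 2 * code bs"

definition runs :: "recf \<Rightarrow> bool list \<Rightarrow> bool list \<Rightarrow> bool" where
  "runs M p x \<longleftrightarrow> eval M [code p] (code x)"

definition prefix_free_machine :: "recf \<Rightarrow> bool" where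
  "prefix_free_machine M \<longleftrightarrow>
     (\<forall>p q x y. runs M p x \<and> runs M q y \<and> prefix p q \<longrightarrow> p = q)"

text \<open>Prefix complexity relative to a machine (infinite if x is never output).\<close>
definition KM :: "recf \<Rightarrow> bool list \<Rightarrow> enat" where
  "KM M x = (INF p \<in> {p. runs M p x}. enat (length p))"

definition optimal_machine :: "recf \<Rightarrow> bool" where
  "optimal_machine U \<longleftrightarrow> prefix_free_machine U \<and>
     (\<forall>M. prefix_free_machine M \<longrightarrow> (\<exists>e::nat. \<forall>x. KM U x \<le> KM M x + enat e))"

end

theory Submission
  imports Defs
begin


lemma code_inj: "code x = code y \<Longrightarrow> x = y"
proof (induction x arbitrary: y)
  case Nil then show ?case by (cases y) (auto split: if_splits)
next
  case (Cons a x)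
  show ?case
  proof (cases y)
    case Nil then show ?thesis using Cons.prems by (auto split: if_splits)
  next
    case (Cons b list)
    have h: "(if a then 2 else 1) + 2 * code x = (if b then 2 else (1::nat)) + 2 * code list"
      using Cons.prems Cons by simp
    have ab: "a = b" using h by (cases a; cases b) presburger+
    then have "code x = code list" using h by simp
    then show ?thesis using Cons.IH Cons ab by simp
  qed
qed


lemma eval_det: "eval f xs y \<Longrightarrow> eval f xs z \<Longrightarrow> y = z"
proof (induction arbitrary: z rule: eval.induct)
  case (evZ xs) from evZ.prems show ?case by (cases rule: eval.cases) simp_all
next
  case (evS x xs) from evS.prems show ?case by (cases rule: eval.cases) simp_all
next
  case (evId i xs) from evId.prems show ?case by (cases rule: eval.cases) simp_all
next
  case (evCn ys gs xs f z')
  from evCn.prems obtain ys' where l: "length ys' = length gs"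
    and c: "\<forall>k<length gs. eval (gs ! k) xs (ys' ! k)" and e: "eval f ys' z"
    by (cases rule: eval.cases) simp_all
  have "ys = ys'"
  proof (rule nth_equalityI)
    show "length ys = length ys'" using evCn.hyps(1) l by simp
    fix i assume "i < length ys"
    then have i: "i < length gs" using evCn.hyps(1) by simp
    then have "eval (gs ! i) xs (ys' ! i)" using c by simp
    then show "ys ! i = ys' ! i" using evCn.IH(1) i by simp
  qed
  then show ?case using evCn.IH(2) e by simp
next
  case (evPr0 g xs z') from evPr0.prems show ?case by (cases rule: eval.cases) (simp_all add: evPr0.IH)
next
  case (evPrS g h n xs y z')
  from evPrS.prems show ?case
  proof (cases rule: eval.cases)
    case (evPrS y')
    then have "y = y'" using evPrS.IH(1) by simp
    then show ?thesis using evPrS.IH(2) evPrS by simp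
  qed
next
  case (evMn f n xs z')
  note ih1 = evMn.IH(1) and ih2 = evMn.IH(2)
  from evMn.prems show ?case
  proof (cases rule: eval.cases)
    case evMn
    show ?thesis
    proof (rule linorder_cases[of n z'])
      assume "n < z'"
      then obtain y where "0 < y" "eval f (n # xs) y" using evMn by blast
      then show ?thesis using ih1 by fastforce
    next
      assume "z' < n"
      then obtain y where "0 < y" "\<forall>x. eval f (z' # xs) x \<longrightarrow> y = x" using ih2 by blast
      then show ?thesis using evMn by fastforce
    qed simp
  qed
qed


definition good :: "bool list set \<Rightarrow> bool list \<Rightarrow> bool" where
  "good B w \<longleftrightarrow> (\<forall>x. sublist x w \<longrightarrow> x \<notin> B)"

definition G :: "bool list set \<Rightarrow> nat \<Rightarrow> bool list set" where
  "G B n = {w. length w = n \<and> good B w}"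

lemma fin_len: "finite {w::bool list. length w = n}"
  using finite_lists_length_eq[of "UNIV::bool set" n] by simp

lemma fin_G: "finite (G B n)"
  by (rule finite_subset[OF _ fin_len[of n]]) (auto simp: G_def)

lemma fin_Bk: "finite {x\<in>(B::bool list set). length x = (k::nat)}"
  by (rule finite_subset[OF _ fin_len[of k]]) auto

lemma good_sub: "good B w \<Longrightarrow> sublist v w \<Longrightarrow> good B v"
  unfolding good_def using sublist_order.order.trans by blast

lemma step_count:
  assumes nB: "[] \<notin> B"
  shows "2 * card (G B n) \<le> card (G B (Suc n)) +
           (\<Sum>k\<le>n. card (G B (n-k)) * card {x\<in>B. length x = Suc k})"
proof -
  let ?f = "\<lambda>(w::bool list,b::bool). w @ [b]"
  let ?S = "?f ` (G B n \<times> UNIV)"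
  let ?T = "\<lambda>k. (\<lambda>(y,z). y @ z) ` (G B (n-k) \<times> {x\<in>B. length x = Suc k})"
  have inj: "inj_on ?f (G B n \<times> UNIV)" by (auto simp: inj_on_def)
  have cS: "card ?S = 2 * card (G B n)"
    using card_image[OF inj] by (simp add: card_cartesian_product)
  have sub: "?S \<subseteq> G B (Suc n) \<union> (\<Union>k\<le>n. ?T k)"
  proof
    fix u assume "u \<in> ?S"
    then obtain w b where u: "u = w @ [b]" and w: "w \<in> G B n" by auto
    show "u \<in> G B (Suc n) \<union> (\<Union>k\<le>n. ?T k)"
    proof (cases "good B u")
      case True then show ?thesis using u w by (simp add: G_def)
    next
      case False
      then obtain x where x: "sublist x u" "x \<in> B" by (auto simp: good_def)
      have gw: "good B w" using w by (simp add: G_def)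
      have "\<not> sublist x w" using gw x(2) by (auto simp: good_def)
      moreover have "suffix x (w @ [b]) \<or> sublist x w" using x(1) u sublist_snoc[of x w b] by metis
      ultimately have "suffix x u" using u by metis
      then obtain y where yx: "u = y @ x" by (auto simp: suffix_def)
      have xne: "x \<noteq> []" using nB x(2) by auto
      then obtain x' c where xc: "x = x' @ [c]" by (cases x rule: rev_cases) auto
      have wy: "w = y @ x'" using yx u xc by simp
      then have "sublist y w" by simp
      then have gy: "good B y" using gw good_sub by blast
      define k where "k = length x - 1"
      have lx: "length x = Suc k" using xne k_def by (cases x) auto
      have kn: "k \<le> n" using w wy xc lx by (simp add: G_def)
      have "length y + k = n" using w wy xc lx by (simp add: G_def)
      then have ly: "length y = n - k" by simp
      have "u \<in> ?T k"
        using yx gy ly x(2) lx by (auto simp: G_def)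
      then show ?thesis using kn by blast
    qed
  qed
  have "card ?S \<le> card (G B (Suc n) \<union> (\<Union>k\<le>n. ?T k))"
    by (rule card_mono[OF _ sub]) (auto intro!: finite_UN_I simp: fin_G fin_Bk)
  also have "\<dots> \<le> card (G B (Suc n)) + card (\<Union>k\<le>n. ?T k)" by (rule card_Un_le)
  also have "card (\<Union>k\<le>n. ?T k) \<le> (\<Sum>k\<le>n. card (?T k))" by (rule card_UN_le) simp
  also have "\<dots> \<le> (\<Sum>k\<le>n. card (G B (n-k)) * card {x\<in>B. length x = Suc k})"
  proof (rule sum_mono)
    fix k assume "k \<in> {..n}"
    have "card (?T k) \<le> card (G B (n-k) \<times> {x\<in>B. length x = Suc k})" by (rule card_image_le) (simp add: fin_G fin_Bk)
    then show "card (?T k) \<le> card (G B (n-k)) * card {x\<in>B. length x = Suc k}"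
      by (simp add: card_cartesian_product)
  qed
  finally show ?thesis using cS by linarith
qed

lemma growth:
  fixes a g :: "nat \<Rightarrow> real" and \<beta> :: real
  assumes nonneg: "\<And>n. a n \<ge> 0"
    and rec: "\<And>n. 2 * a n \<le> a (Suc n) + (\<Sum>k\<le>n. a (n-k) * g k)"
    and g0: "\<And>k. g k \<ge> 0" and b1: "\<beta> \<ge> 1"
    and cond: "\<And>n. (\<Sum>k\<le>n. g k / \<beta>^k) \<le> 2 - \<beta>"
  shows "\<beta> * a n \<le> a (Suc n)"
proof (induction n rule: less_induct)
  case (less n)
  have chain: "a (n-k) * \<beta>^k \<le> a n" if "k \<le> n" for k
    using that
  proof (induction k)
    case 0 then show ?case by simp
  next
    case (Suc k)
    have m: "n - Suc k < n" "Suc (n - Suc k) = n - k" using Suc.prems by auto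
    have "a (n - Suc k) * \<beta> ^ Suc k = (\<beta> * a (n - Suc k)) * \<beta>^k" by simp
    also have "\<dots> \<le> a (n - k) * \<beta>^k"
      using less.IH[OF m(1)] m(2) b1 by (intro mult_right_mono) auto
    also have "\<dots> \<le> a n" using Suc by simp
    finally show ?case .
  qed
  have "(\<Sum>k\<le>n. a (n-k) * g k) \<le> (\<Sum>k\<le>n. a n * (g k / \<beta>^k))"
  proof (rule sum_mono)
    fix k assume "k \<in> {..n}"
    then have "a (n-k) * \<beta>^k \<le> a n" using chain by simp
    then have "a (n-k) \<le> a n / \<beta>^k" using b1 by (simp add: field_simps)
    then have "a (n-k) * g k \<le> (a n / \<beta>^k) * g k" using g0 by (rule mult_right_mono)
    then show "a (n-k) * g k \<le> a n * (g k / \<beta>^k)" by simp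
  qed
  also have "\<dots> = a n * (\<Sum>k\<le>n. g k / \<beta>^k)" by (simp add: sum_distrib_left)
  also have "\<dots> \<le> a n * (2 - \<beta>)" using cond nonneg by (rule mult_left_mono)
  finally have s: "(\<Sum>k\<le>n. a (n-k) * g k) \<le> a n * (2 - \<beta>)" .
  have "a n * (2 - \<beta>) = 2 * a n - \<beta> * a n" by (simp add: algebra_simps)
  then show ?case using rec[of n] s by linarith
qed

lemma avoid:
  assumes nB: "[] \<notin> B" and b1: "\<beta> \<ge> 1"
    and gb: "\<And>k. real (card {x\<in>B. length x = Suc k}) \<le> g k"
    and cond: "\<And>n. (\<Sum>k\<le>n. g k / \<beta>^k) \<le> 2 - \<beta>"
  shows "G B n \<noteq> {}"
proof -
  define a where "a n = real (card (G B n))" for n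
  have rec: "2 * a n \<le> a (Suc n) + (\<Sum>k\<le>n. a (n-k) * g k)" for n
  proof -
    have "real (2 * card (G B n)) \<le> real (card (G B (Suc n)) +
           (\<Sum>k\<le>n. card (G B (n-k)) * card {x\<in>B. length x = Suc k}))"
      using step_count[OF nB, of n] by linarith
    also have "\<dots> \<le> a (Suc n) + (\<Sum>k\<le>n. a (n-k) * g k)"
      unfolding a_def of_nat_add of_nat_sum of_nat_mult
    proof (intro add_left_mono sum_mono)
      fix k assume "k \<in> {..n}"
      show "real (card (G B (n - k))) * real (card {x \<in> B. length x = Suc k}) \<le> real (card (G B (n - k))) * g k"
        using gb[of k] by (rule mult_left_mono) simp
    qed
    finally show ?thesis by (simp add: a_def)
  qed
  have g0: "g k \<ge> 0" for k using gb[of k] by (meson of_nat_0_le_iff order_trans)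
  have gr: "\<beta> * a n \<le> a (Suc n)" for n
    by (rule growth[where g=g]) (use rec g0 b1 cond in \<open>auto simp: a_def\<close>)
  have "G B 0 = {[]}" using nB by (auto simp: G_def good_def)
  then have "a 0 = 1" by (simp add: a_def)
  have "a n \<ge> 1" for n
  proof (induction n)
    case 0 then show ?case using \<open>a 0 = 1\<close> by simp
  next
    case (Suc n)
    have "1 * 1 \<le> \<beta> * a n" using b1 Suc by (intro mult_mono) auto
    then show ?case using gr[of n] by simp
  qed
  then have "card (G B n) \<ge> 1" unfolding a_def by simp
  then show ?thesis by auto
qed

lemma infinite_seq:
  assumes ex: "\<And>n. \<exists>w. length w = n \<and> good B w"
  shows "\<exists>\<omega>::nat \<Rightarrow> bool. \<forall>n. good B (map \<omega> [0..<n])"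
proof -
  define ext where "ext w \<longleftrightarrow> (\<forall>m. \<exists>v. length v = m \<and> good B (w @ v))" for w
  have e0: "ext []" using ex by (simp add: ext_def)
  have estep: "\<exists>b. ext (w @ [b])" if ew: "ext w" for w
  proof (rule ccontr)
    assume "\<not> ?thesis"
    then have "\<forall>b. \<exists>m. \<forall>v. length v = m \<longrightarrow> \<not> good B (w @ [b] @ v)"
      by (auto simp: ext_def)
    then obtain mb where mb: "\<And>b v. length v = mb b \<Longrightarrow> \<not> good B (w @ [b] @ v)" by metis
    obtain v where v: "length v = Suc (max (mb True) (mb False))" "good B (w @ v)"
      using ew unfolding ext_def by blast
    then obtain b v' where bv: "v = b # v'" by (cases v) auto
    have "sublist (w @ [b] @ take (mb b) v') (w @ v)"
    proof -
      have "w @ v = (w @ [b] @ take (mb b) v') @ drop (mb b) v'" using bv by simp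
      then show ?thesis by (metis sublist_append_rightI)
    qed
    then have "good B (w @ [b] @ take (mb b) v')" using v(2) good_sub by blast
    moreover have "length (take (mb b) v') = mb b" using v(1) bv by (cases b) auto
    ultimately show False using mb by blast
  qed
  define pre where "pre = rec_nat [] (\<lambda>n p. p @ [SOME b. ext (p @ [b])])"
  have pre0: "pre 0 = []" and preS: "pre (Suc n) = pre n @ [SOME b. ext (pre n @ [b])]" for n
    by (simp_all add: pre_def)
  have ep: "ext (pre n)" for n
  proof (induction n)
    case 0 then show ?case using e0 pre0 by simp
  next
    case (Suc n) then show ?case using preS estep by (metis someI_ex)
  qed
  define \<omega> where "\<omega> n = (SOME b. ext (pre n @ [b]))" for n
  have "map \<omega> [0..<n] = pre n" for n
    by (induction n) (simp_all add: pre0 preS \<omega>_def)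
  moreover have "good B (pre n)" for n using ep[of n] unfolding ext_def by (metis append_Nil2 length_0_conv)
  ultimately have "good B (map \<omega> [0..<n])" for n by simp
  then show ?thesis by blast
qed



lemma runs_inj: "runs U p x \<Longrightarrow> runs U p y \<Longrightarrow> x = y"
  unfolding runs_def using eval_det code_inj by blast

lemma geo_bound:
  fixes r :: real assumes "0 \<le> r" "r < 1"
  shows "(\<Sum>k\<le>n. r^k) \<le> 1 / (1 - r)"
proof -
  have "(\<Sum>k\<le>n. r^k) = (\<Sum>k<Suc n. r^k)" by (simp add: lessThan_Suc_atMost)
  also have "\<dots> = (1 - r^Suc n) / (1 - r)" using assms sum_gp_strict[of r "Suc n"] by (simp del: sum.lessThan_Suc)
  also have "\<dots> \<le> 1 / (1 - r)" using assms by (intro divide_right_mono) auto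
  finally show ?thesis .
qed

lemma card_short: "card {p::bool list. length p \<le> N} \<le> 2 ^ Suc N"
proof -
  have "card {p::bool list. length p \<le> N} = (\<Sum>i\<le>N. 2^i)"
    using card_lists_length_le[of "UNIV::bool set" N] by simp
  also have "(\<Sum>i\<le>N. (2::nat)^i) < 2 ^ Suc N" by (induction N) auto
  finally show ?thesis by simp
qed

lemma count_B:
  fixes U :: recf and cc d :: real and L :: nat
  shows "real (card {x\<in>{x. ereal_of_enat (KM U x) < ereal (cc * real (length x) - d)}. length x = L})
          \<le> 2 * 2 powr (cc * real L - d)"
proof (cases "cc * real L - d < 0")
  case True
  have e: "{x\<in>{x. ereal_of_enat (KM U x) < ereal (cc * real (length x) - d)}. length x = L} = {}"
  proof -
    have "\<not> ereal_of_enat (KM U x) < ereal (cc * real L - d)" for x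
    proof -
      have "ereal (cc * real L - d) \<le> 0" using True by simp
      also have "0 \<le> ereal_of_enat (KM U x)" by simp
      finally show ?thesis by simp
    qed
    then show ?thesis by auto
  qed
  show ?thesis unfolding e by simp
next
  case False
  define R where "R = cc * real L - d"
  define N where "N = nat \<lfloor>R\<rfloor>"
  let ?Bk = "{x\<in>{x. ereal_of_enat (KM U x) < ereal (cc * real (length x) - d)}. length x = L}"
  have ex: "\<exists>p. runs U p x \<and> length p \<le> N" if "x \<in> ?Bk" for x
  proof -
    have l1: "ereal_of_enat (KM U x) < ereal (cc * real (length x) - d)" and l2: "length x = L"
      using that by blast+
    have lt: "ereal_of_enat (KM U x) < ereal R" using l1 unfolding l2 R_def .
    have "KM U x < enat (Suc N)"
    proof (cases "KM U x")
      case (enat m)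
      then have "real m < R" using lt by simp
      then have "m \<le> N" unfolding N_def by linarith
      then show ?thesis using enat by simp
    next
      case infinity then show ?thesis using lt by simp
    qed
    then obtain p where "runs U p x" "enat (length p) < enat (Suc N)"
      unfolding KM_def by (auto simp: INF_less_iff)
    then show ?thesis by auto
  qed
  define f where "f x = (SOME p. runs U p x \<and> length p \<le> N)" for x
  have fx: "runs U (f x) x \<and> length (f x) \<le> N" if "x \<in> ?Bk" for x
    unfolding f_def using someI_ex[OF ex[OF that]] .
  have inj: "inj_on f ?Bk"
  proof (rule inj_onI)
    fix x y assume x: "x \<in> ?Bk" and y: "y \<in> ?Bk" and e: "f x = f y"
    have "runs U (f x) x" using fx[OF x] by simp
    moreover have "runs U (f x) y" using fx[OF y] e by simp
    ultimately show "x = y" by (rule runs_inj)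
  qed
  have "card ?Bk = card (f ` ?Bk)" using card_image[OF inj] by simp
  also have "\<dots> \<le> card {p::bool list. length p \<le> N}"
    by (rule card_mono) (use fx finite_lists_length_le[of "UNIV::bool set" N] in auto)
  also have "\<dots> \<le> 2 ^ Suc N" by (rule card_short)
  finally have h: "card ?Bk \<le> 2 ^ Suc N" .
  have "real (card ?Bk) \<le> real (2 ^ Suc N)" using h by (rule of_nat_mono)
  then have "real (card ?Bk) \<le> (2::real) ^ Suc N" by simp
  also have "(2::real) ^ Suc N = 2 * 2 powr real N" by (simp add: powr_realpow)
  also have "\<dots> \<le> 2 * 2 powr R"
    using False R_def N_def by (intro mult_left_mono powr_mono) linarith+
  finally show ?thesis by (simp add: R_def)
qed



theorem lemma1:
  fixes c :: real and U :: recf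
  assumes "c < 1" and "optimal_machine U"
  shows "\<exists>(\<omega> :: nat \<Rightarrow> bool) (d :: real). \<forall>i j. i \<le> j \<longrightarrow>
           ereal (c * real (length (map \<omega> [i..<Suc j])) - d)
             \<le> ereal_of_enat (KM U (map \<omega> [i..<Suc j]))"
proof -
  define cc where "cc = max c (1/2)"
  have cc1: "cc < 1" and cc0: "1/2 \<le> cc" and ccc: "c \<le> cc" using assms(1) by (auto simp: cc_def)
  define t where "t = (2::real) powr cc"
  have t1: "1 \<le> t" unfolding t_def using cc0 by (simp add: ge_one_powr_ge_zero)
  have t2: "t < 2" unfolding t_def using cc1 powr_less_mono[of cc 1 2] by simp
  define \<beta> where "\<beta> = (t + 2) / 2"
  define r where "r = t / \<beta>"
  define M where "M = 4 * t * (t + 2) / (2 - t)^2"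
  define d where "d = log 2 M"
  have b1: "\<beta> \<ge> 1" using t1 by (simp add: \<beta>_def)
  have r0: "0 \<le> r" and r1: "r < 1" using t1 t2 by (auto simp: r_def \<beta>_def field_simps)
  have M1: "1 \<le> M"
  proof -
    have "(2 - t)^2 \<le> 1" using t1 t2 by (intro power_le_one) auto
    moreover have "(2 - t)^2 > 0" using t2 by simp
    moreover have "t * (t + 2) \<ge> 1 * 3" using t1 by (intro mult_mono) auto
    then have "4 * t * (t + 2) \<ge> 1" by simp
    ultimately show ?thesis unfolding M_def by (simp add: field_simps)
  qed
  have d0: "0 \<le> d" unfolding d_def using M1 by simp
  have Md: "2 powr d = M" unfolding d_def using M1 by simp
  define B where "B = {x. ereal_of_enat (KM U x) < ereal (cc * real (length x) - d)}"
  define g where "g k = 2 * t ^ Suc k / M" for k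
  have nB: "[] \<notin> B"
  proof
    assume "[] \<in> B"
    then have "ereal_of_enat (KM U []) < ereal (- d)" by (simp add: B_def)
    also have "ereal (-d) \<le> 0" using d0 by simp
    also have "0 \<le> ereal_of_enat (KM U [])" by simp
    finally show False by simp
  qed
  have gb: "real (card {x\<in>B. length x = Suc k}) \<le> g k" for k
  proof -
    have "real (card {x\<in>B. length x = Suc k}) \<le> 2 * 2 powr (cc * real (Suc k) - d)"
      unfolding B_def by (rule count_B)
    also have "2 powr (cc * real (Suc k) - d) = t ^ Suc k / M"
    proof -
      have "2 powr (cc * real (Suc k)) = t powr real (Suc k)" unfolding t_def by (simp add: powr_powr)
      also have "\<dots> = t ^ Suc k" using t1 powr_realpow[of t "Suc k"] by (simp del: of_nat_Suc)
      finally have "2 powr (cc * real (Suc k)) = t ^ Suc k" .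
      then show ?thesis by (simp add: powr_diff Md)
    qed
    finally show ?thesis by (simp add: g_def)
  qed
  have cond: "(\<Sum>k\<le>n. g k / \<beta>^k) \<le> 2 - \<beta>" for n
  proof -
    have "(\<Sum>k\<le>n. g k / \<beta>^k) = (\<Sum>k\<le>n. (2 * t / M) * r^k)"
      by (rule sum.cong) (simp_all add: g_def r_def power_divide)
    also have "\<dots> = (2 * t / M) * (\<Sum>k\<le>n. r^k)" by (simp add: sum_distrib_left)
    also have "\<dots> \<le> (2 * t / M) * (1 / (1 - r))"
      using geo_bound[OF r0 r1] t1 M1 by (intro mult_left_mono) auto
    also have "\<dots> = 2 - \<beta>"
    proof -
      have nz: "2 - t \<noteq> 0" "t + 2 \<noteq> 0" "t \<noteq> 0" using t1 t2 by auto
      have e1: "1 - r = (2 - t) / (t + 2)" unfolding r_def \<beta>_def using nz by (simp add: field_simps)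
      have nz2: "4 * t * (t + 2) \<noteq> 0" "(2 - t)^2 \<noteq> 0" using nz by auto
      have "2 * t / M = 2 * t * (2 - t)^2 / (4 * t * (t + 2))" unfolding M_def by simp
      also have "\<dots> = (2 - t) * (2 - t) / (2 * (t + 2))"
      proof -
        have a: "2 * t + 4 \<noteq> 0" "4 * t + 8 \<noteq> 0" using t1 by auto
        have d1: "4 * t * (t + 2) \<noteq> 0" "2 * (t + 2) \<noteq> 0" using t1 by auto
        show ?thesis unfolding frac_eq_eq[OF d1] by (simp add: power2_eq_square algebra_simps)
      qed
      finally have e2: "2 * t / M = (2 - t) * (2 - t) / (2 * (t + 2))" .
      have "(2 * t / M) * (1 / (1 - r)) = (2 - t) * (2 - t) / (2 * (t + 2)) * ((t + 2) / (2 - t))"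
        unfolding e1 e2 by simp
      also have "\<dots> = ((2 - t) * (2 - t) * (t + 2)) / ((2 * (t + 2)) * (2 - t))"
        by (simp only: times_divide_times_eq)
      also have "\<dots> = (2 - t) / 2"
      proof -
        have d1: "(2 * (t + 2)) * (2 - t) \<noteq> 0" "(2::real) \<noteq> 0" using nz by auto
        show ?thesis unfolding frac_eq_eq[OF d1] by (simp add: algebra_simps)
      qed
      also have "\<dots> = 2 - \<beta>" unfolding \<beta>_def by (simp add: field_simps)
      finally show ?thesis .
    qed
    finally show ?thesis .
  qed
  have ne: "G B n \<noteq> {}" for n by (rule avoid[OF nB b1 gb cond])
  have "\<exists>w. length w = n \<and> good B w" for n using ne[of n] by (auto simp: G_def)
  then obtain \<omega> :: "nat \<Rightarrow> bool" where om: "\<And>n. good B (map \<omega> [0..<n])"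
    using infinite_seq by blast
  have "ereal (c * real (length (map \<omega> [i..<Suc j])) - d)
             \<le> ereal_of_enat (KM U (map \<omega> [i..<Suc j]))" if "i \<le> j" for i j
  proof -
    let ?x = "map \<omega> [i..<Suc j]"
    have "[0..<Suc j] = [0..<i + (Suc j - i)]" using that by simp
    also have "\<dots> = [0..<i] @ [i..<i + (Suc j - i)]" by (rule upt_add_eq_append) simp
    also have "\<dots> = [0..<i] @ [i..<Suc j]" using that by simp
    finally have "[0..<Suc j] = [0..<i] @ [i..<Suc j]" .
    then have "map \<omega> [0..<Suc j] = map \<omega> [0..<i] @ ?x" by simp
    then have "sublist ?x (map \<omega> [0..<Suc j])" by simp
    then have "?x \<notin> B" using om unfolding good_def by blast
    then have h: "ereal (cc * real (length ?x) - d) \<le> ereal_of_enat (KM U ?x)"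
      by (simp add: B_def not_less)
    have "c * real (length ?x) \<le> cc * real (length ?x)" using ccc by (simp add: mult_right_mono)
    then have "ereal (c * real (length ?x) - d) \<le> ereal (cc * real (length ?x) - d)" by simp
    then show ?thesis using h by (rule order_trans)
  qed
  then show ?thesis by blast
qed

end
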